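(* Let $X$ be a Hausdorff, locally compact, arc connected space with at least two points, let $\mathcal I$ be an ideal on $X$ and $\alpha$ an infinite cardinal. Then for all $a,b\in X$ the groups $\mathfrak P^\alpha_{\mathcal I}(X,a)$ and $\mathfrak P^\alpha_{\mathcal I}(X,b)$ are isomorphic.
   Context: A space is arc connected if any two distinct points $p,q$ are joined by a continuous injective map $h:[0,1]\to X$ with $h(0)=p$, $h(1)=q$. An ideal on a set $X$ is a nonempty family $\mathcal I$ of subsets of $X$ closed under finite unions and under taking subsets. For a nonzero cardinal $\alpha$ and an ideal $\mathcal I$ on $X$, a continuous map $f:Z\to X$ is an $\alpha\frac{\mathcal I}{}$map if there is $A\in\mathcal I$ such that for every $x\in X\setminus A$ one has $|f^{-1}(x)|\le\alpha$ when $\alpha$ is finite, and $|f^{-1}(x)|<\alpha$ when $\alpha$ is infinite. An $\alpha\frac{\mathcal I}{}$loop with base point $a$ is an $\alpha\frac{\mathcal I}{}$map $f:[0,1]\to X$ with $f(0)=f(1)=a$. $\mathfrak P^\alpha_{\mathcal I}(X,a)$ denotes the subgroup of $\pi_1(X,a)$ generated by the homotopy classes (rel endpoints) of all $\alpha\frac{\mathcal I}{}$loops with base point $a$. *)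

theory Defs
  imports "HOL-Analysis.Analysis" "HOL-Library.Equipollence" "HOL-Algebra.Generated_Groups"
begin

text \<open>The space X is a subset of a Hausdorff type 'a, carrying the subspace topology.\<close>

definition arc_connected_set :: "'a::topological_space set \<Rightarrow> bool" where
  "arc_connected_set X \<longleftrightarrow>
     (\<forall>p\<in>X. \<forall>q\<in>X. p \<noteq> q \<longrightarrow>
        (\<exists>h. arc h \<and> path_image h \<subseteq> X \<and> pathstart h = p \<and> pathfinish h = q))"

definition is_ideal_on :: "'a set \<Rightarrow> 'a set set \<Rightarrow> bool" where
  "is_ideal_on X I \<longleftrightarrow> I \<noteq> {} \<and> (\<forall>A\<in>I. A \<subseteq> X)
     \<and> (\<forall>A\<in>I. \<forall>B\<in>I. A \<union> B \<in> I) \<and> (\<forall>A\<in>I. \<forall>B. B \<subseteq> A \<longrightarrow> B \<in> I)"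

definition loops :: "'a::topological_space set \<Rightarrow> 'a \<Rightarrow> (real \<Rightarrow> 'a) set" where
  "loops X a = {p. path p \<and> path_image p \<subseteq> X \<and> pathstart p = a \<and> pathfinish p = a}"

definition path_class :: "'a::topological_space set \<Rightarrow> (real \<Rightarrow> 'a) \<Rightarrow> (real \<Rightarrow> 'a) set" where
  "path_class X p = {q. homotopic_paths X p q}"

definition fundamental_group :: "'a::topological_space set \<Rightarrow> 'a \<Rightarrow> (real \<Rightarrow> 'a) set monoid" where
  "fundamental_group X a =
    \<lparr> carrier = path_class X ` loops X a,
      mult = (\<lambda>C D. {r. \<exists>p\<in>C. \<exists>q\<in>D. homotopic_paths X (p +++ q) r}),
      one = path_class X (\<lambda>t. a) \<rparr>"

text \<open>alpha-I-map from [0,1] to X, where the infinite cardinal alpha is given as the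
  cardinality of a set K: fibres of points outside some A in I have cardinality < |K|.\<close>
definition alpha_I_path :: "'b set \<Rightarrow> 'a set set \<Rightarrow> 'a::topological_space set \<Rightarrow> (real \<Rightarrow> 'a) \<Rightarrow> bool" where
  "alpha_I_path K I X f \<longleftrightarrow> path f \<and> path_image f \<subseteq> X \<and>
     (\<exists>A\<in>I. \<forall>x \<in> X - A. {t\<in>{0..1}. f t = x} \<prec> K)"

definition alpha_I_loops :: "'b set \<Rightarrow> 'a set set \<Rightarrow> 'a::topological_space set \<Rightarrow> 'a \<Rightarrow> (real \<Rightarrow> 'a) set" where
  "alpha_I_loops K I X a = {f. alpha_I_path K I X f \<and> f 0 = a \<and> f 1 = a}"

definition P_group :: "'b set \<Rightarrow> 'a set set \<Rightarrow> 'a::topological_space set \<Rightarrow> 'a \<Rightarrow> (real \<Rightarrow> 'a) set monoid" where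
  "P_group K I X a = (fundamental_group X a)
     \<lparr> carrier := generate (fundamental_group X a) (path_class X ` alpha_I_loops K I X a) \<rparr>"

end

theory Submission
  imports Defs
begin


definition cjp :: "(real \<Rightarrow> 'a::topological_space) \<Rightarrow> (real \<Rightarrow> 'a) \<Rightarrow> real \<Rightarrow> 'a" where
  "cjp g p = reversepath g +++ (p +++ g)"


lemma hp_rid:
  assumes "path p" "path_image p \<subseteq> S" "x = pathfinish p"
  shows "homotopic_paths S (p +++ (\<lambda>t. x)) p"
proof -
  have \<section>: "continuous_on {0..1} (\<lambda>t::real. if t \<le> 1/2 then 2 *\<^sub>R t else 1)"
    unfolding split_01
    by (rule continuous_on_cases continuous_intros | force simp: pathfinish_def joinpaths_def)+
  show ?thesis
    apply (rule homotopic_paths_sym)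
    using assms unfolding pathfinish_def joinpaths_def
    by (intro \<section> continuous_on_cases continuous_intros homotopic_paths_reparametrize [where f = "\<lambda>t. if t \<le> 1/2 then 2 *\<^sub>R t else 1"]; force)
qed

lemma hp_lid:
  assumes "path p" "path_image p \<subseteq> S" "x = pathstart p"
  shows "homotopic_paths S ((\<lambda>t. x) +++ p) p"
proof -
  have \<section>: "continuous_on {0..1} (\<lambda>t::real. if t \<le> 1/2 then 0 else 2 * t - 1)"
    unfolding split_01
    by (rule continuous_on_cases continuous_intros | force simp: pathfinish_def joinpaths_def)+
  show ?thesis
    apply (rule homotopic_paths_sym)
    using assms unfolding pathstart_def joinpaths_def
    by (intro \<section> continuous_on_cases continuous_intros homotopic_paths_reparametrize [where f = "\<lambda>t. if t \<le> 1/2 then 0 else 2 * t - 1"]; force)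
qed

lemma hp_rinv:
  assumes "path p" "path_image p \<subseteq> S"
    shows "homotopic_paths S (p +++ reversepath p) (\<lambda>t. pathstart p)"
proof -
  have p: "continuous_on {0..1} p" 
    using assms by (auto simp: path_def)
  let ?A = "{0..1} \<times> {0..1}"
  have "continuous_on ?A (\<lambda>x. ((\<lambda>t. p (fst x * t)) +++ reversepath ((\<lambda>t. p (fst x * t)))) (snd x))"
    unfolding joinpaths_def reversepath_def path_def
  proof (rule continuous_on_cases_le)
    show "continuous_on {x \<in> ?A. snd x \<le> 1/2} (\<lambda>t. p (fst t * (2 * snd t)))"
         "continuous_on {x \<in> ?A. 1/2 \<le> snd x} (\<lambda>t. p (fst t * (1 - (2 * snd t - 1))))"
         "continuous_on ?A snd"
      by (intro continuous_on_compose2 [OF p] continuous_intros; auto simp: mult_le_one)+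
  qed (auto simp: algebra_simps)
  then show ?thesis
    using assms
    apply (subst homotopic_paths_sym_eq)
    unfolding homotopic_paths_def homotopic_with_def
    apply (rule_tac x="(\<lambda>y. ((\<lambda>t. p (fst y * t)) +++ reversepath((\<lambda>t. p (fst y * t)))) (snd y))" in exI)
    apply (force simp: mult_le_one path_defs joinpaths_def reversepath_def)
    done
qed

lemma hp_join_l: "homotopic_paths X q q' \<Longrightarrow> path p \<Longrightarrow> path_image p \<subseteq> X \<Longrightarrow> pathfinish p = pathstart q
  \<Longrightarrow> homotopic_paths X (p +++ q) (p +++ q')"
  by (simp add: homotopic_paths_join)

lemma hp_join_r: "homotopic_paths X p p' \<Longrightarrow> path q \<Longrightarrow> path_image q \<subseteq> X \<Longrightarrow> pathfinish p = pathstart q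
  \<Longrightarrow> homotopic_paths X (p +++ q) (p' +++ q)"
  by (simp add: homotopic_paths_join)

lemma conj_resp:
  assumes "homotopic_paths X p p'" "path g" "path_image g \<subseteq> X" "pathstart g = pathfinish p" "pathstart p = pathfinish p"
  shows "homotopic_paths X (cjp g p) (cjp g p')"
  unfolding cjp_def using assms
  by (intro hp_join_l hp_join_r) (auto intro!: subset_path_image_join simp: homotopic_paths_imp_pathfinish homotopic_paths_imp_pathstart)

lemma conj_mult:
  assumes g: "path g" "path_image g \<subseteq> X" "pathstart g = a"
    and p: "path p" "path_image p \<subseteq> X" "pathstart p = a" "pathfinish p = a"
    and q: "path q" "path_image q \<subseteq> X" "pathstart q = a" "pathfinish q = a"
  shows "homotopic_paths X (cjp g (p +++ q)) (cjp g p +++ cjp g q)"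
proof -
  note ss = assms
  have "homotopic_paths X (g +++ (reversepath g +++ (q +++ g))) ((g +++ reversepath g) +++ (q +++ g))"
    using ss by (intro homotopic_paths_assoc) (auto simp: subset_path_image_join)
  also have "homotopic_paths X \<dots> ((\<lambda>t. a) +++ (q +++ g))"
    using ss hp_rinv[of g X] by (intro hp_join_r) (auto simp: subset_path_image_join)
  also have "homotopic_paths X \<dots> (q +++ g)"
    using ss by (intro hp_lid) (auto simp: subset_path_image_join)
  finally have 1: "homotopic_paths X (g +++ (reversepath g +++ (q +++ g))) (q +++ g)" .
  have "homotopic_paths X ((p +++ g) +++ (reversepath g +++ (q +++ g))) (p +++ (g +++ (reversepath g +++ (q +++ g))))"
    using ss by (intro homotopic_paths_sym[OF homotopic_paths_assoc]) (auto simp: subset_path_image_join)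
  also have "homotopic_paths X \<dots> (p +++ (q +++ g))"
    using ss 1 by (intro hp_join_l) (auto simp: subset_path_image_join)
  also have "homotopic_paths X \<dots> ((p +++ q) +++ g)"
    using ss by (intro homotopic_paths_assoc) (auto simp: subset_path_image_join)
  finally have 2: "homotopic_paths X ((p +++ g) +++ (reversepath g +++ (q +++ g))) ((p +++ q) +++ g)" .
  have "homotopic_paths X (cjp g p +++ cjp g q) (reversepath g +++ ((p +++ g) +++ (reversepath g +++ (q +++ g))))"
    unfolding cjp_def using ss by (intro homotopic_paths_sym[OF homotopic_paths_assoc]) (auto simp: subset_path_image_join)
  also have "homotopic_paths X \<dots> (cjp g (p +++ q))"
    unfolding cjp_def using ss 2 by (intro hp_join_l) (auto simp: subset_path_image_join)
  finally show ?thesis by (rule homotopic_paths_sym)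
qed

lemma conj_cancel:
  assumes g: "path g" "path_image g \<subseteq> X" "pathstart g = a"
    and p: "path p" "path_image p \<subseteq> X" "pathstart p = a" "pathfinish p = a"
  shows "homotopic_paths X (cjp (reversepath g) (cjp g p)) p"
proof -
  note ss = assms
  let ?b = "pathfinish g"
  have "homotopic_paths X ((p +++ g) +++ reversepath g) (p +++ (g +++ reversepath g))"
    using ss by (intro homotopic_paths_sym[OF homotopic_paths_assoc]) (auto simp: subset_path_image_join)
  also have "homotopic_paths X (p +++ (g +++ reversepath g)) (p +++ (\<lambda>t. a))"
    using ss hp_rinv[of g X] by (intro hp_join_l) (auto simp: subset_path_image_join)
  also have "homotopic_paths X (p +++ (\<lambda>t. a)) p"
    using ss by (intro hp_rid) (auto simp: subset_path_image_join)
  finally have 1: "homotopic_paths X ((p +++ g) +++ reversepath g) p" .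
  have "homotopic_paths X (cjp (reversepath g) (cjp g p)) (g +++ (reversepath g +++ ((p +++ g) +++ reversepath g)))"
    unfolding cjp_def reversepath_reversepath
    using ss by (intro hp_join_l homotopic_paths_sym[OF homotopic_paths_assoc]) (auto simp: subset_path_image_join)
  also have "homotopic_paths X \<dots> (g +++ (reversepath g +++ p))"
    using ss 1 by (intro hp_join_l) (auto simp: subset_path_image_join)
  also have "homotopic_paths X \<dots> ((g +++ reversepath g) +++ p)"
    using ss by (intro homotopic_paths_assoc) (auto simp: subset_path_image_join)
  also have "homotopic_paths X \<dots> ((\<lambda>t. a) +++ p)"
    using ss hp_rinv[of g X] by (intro hp_join_r) (auto simp: subset_path_image_join)
  also have "homotopic_paths X \<dots> p"
    using ss by (intro hp_lid) (auto simp: subset_path_image_join)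
  finally show ?thesis .
qed

lemma card_lemma:
  assumes "B \<subseteq> h ` A \<union> F" "finite F" "A \<prec> K" "infinite K"
  shows "B \<prec> K"
proof -
  have "h ` A \<union> F \<prec> K" using assms(2)
  proof (induction F rule: finite_induct)
    case empty
    then show ?case using lesspoll_trans1[OF image_lepoll assms(3)] by simp
  next
    case (insert x F)
    show ?case
    proof (cases "finite (h ` A \<union> F)")
      case True
      then show ?thesis using finite_lesspoll_infinite[OF assms(4)] by (metis Un_insert_right finite_insert)
    next
      case False
      then have "insert x (h ` A \<union> F) \<approx> h ` A \<union> F" by (rule infinite_insert_eqpoll)
      then show ?thesis using insert.IH eq_lesspoll_trans by (metis Un_insert_right)
    qed
  qed
  then show ?thesis using assms(1) subset_imp_lepoll lesspoll_trans1 by blast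
qed

lemma fib_join:
  "{t\<in>{0..1}. (g1 +++ g2) t = x} \<subseteq> (\<lambda>s. s/2) ` {t\<in>{0..1}. g1 t = x} \<union> (\<lambda>s. (s+1)/2) ` {t\<in>{0..1}. g2 t = x}"
proof
  fix t assume t: "t \<in> {t\<in>{0..1}. (g1 +++ g2) t = x}"
  show "t \<in> (\<lambda>s. s/2) ` {t\<in>{0..1}. g1 t = x} \<union> (\<lambda>s. (s+1)/2) ` {t\<in>{0..1}. g2 t = x}"
  proof (cases "t \<le> 1/2")
    case True
    then have "2*t \<in> {t\<in>{0..1}. g1 t = x}" using t by (auto simp: joinpaths_def)
    then show ?thesis by (intro UnI1 image_eqI[where x="2*t"]) auto
  next
    case False
    then have "2*t-1 \<in> {t\<in>{0..1}. g2 t = x}" using t by (auto simp: joinpaths_def)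
    then show ?thesis by (intro UnI2 image_eqI[where x="2*t-1"]) auto
  qed
qed

lemma fib_arc_finite: assumes "arc g" shows "finite {t\<in>{0..1}. g t = x}"
proof -
  have "inj_on g {0..1}" using assms by (simp add: arc_def)
  then have "{t\<in>{0..1}. g t = x} \<subseteq> {THE t. t \<in> {0..1} \<and> g t = x}"
    using inj_on_vimage_singleton[of g "{0..1}" x] by auto
  then show ?thesis using finite_subset by blast
qed

lemma conj_alpha:
  assumes "arc g" "path_image g \<subseteq> X" "pathstart g = a" "pathfinish g = b" "infinite K"
    and "p \<in> alpha_I_loops K I X a"
  shows "cjp g p \<in> alpha_I_loops K I X b"
proof -
  from assms(6) have p: "path p" "path_image p \<subseteq> X" "p 0 = a" "p 1 = a"
    and A: "\<exists>A\<in>I. \<forall>x \<in> X - A. {t\<in>{0..1}. p t = x} \<prec> K"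
    by (auto simp: alpha_I_loops_def alpha_I_path_def)
  have pg: "path g" using assms(1) arc_imp_path by blast
  have ps: "pathstart p = a" "pathfinish p = a" using p by (auto simp: pathstart_def pathfinish_def)
  have path: "path (cjp g p)" "path_image (cjp g p) \<subseteq> X"
    using p pg ps assms(2-4) by (auto simp: cjp_def subset_path_image_join)
  have e: "cjp g p 0 = b" "cjp g p 1 = b"
    using assms(3,4) ps unfolding cjp_def
    by (simp_all add: joinpaths_def reversepath_def pathstart_def pathfinish_def)
  from A obtain A where AI: "A \<in> I" and A: "\<forall>x \<in> X - A. {t\<in>{0..1}. p t = x} \<prec> K" by blast
  have "{t\<in>{0..1}. cjp g p t = x} \<prec> K" if x: "x \<in> X - A" for x
  proof (rule card_lemma)
    let ?h1 = "\<lambda>s::real. s/2" and ?h2 = "\<lambda>s::real. (s+1)/2"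
    let ?F = "?h1 ` {t\<in>{0..1}. reversepath g t = x} \<union> ?h2 ` ?h2 ` {t\<in>{0..1}. g t = x}"
    have "{t\<in>{0..1}. cjp g p t = x} \<subseteq> ?h1 ` {t\<in>{0..1}. reversepath g t = x} \<union> ?h2 ` {t\<in>{0..1}. (p +++ g) t = x}"
      unfolding cjp_def by (rule fib_join)
    also have "\<dots> \<subseteq> ?h1 ` {t\<in>{0..1}. reversepath g t = x} \<union> ?h2 ` (?h1 ` {t\<in>{0..1}. p t = x} \<union> ?h2 ` {t\<in>{0..1}. g t = x})"
      using fib_join[of p g x] by blast
    also have "\<dots> = (?h2 \<circ> ?h1) ` {t\<in>{0..1}. p t = x} \<union> ?F"
      by (auto simp: image_comp)
    finally show "{t\<in>{0..1}. cjp g p t = x} \<subseteq> (?h2 \<circ> ?h1) ` {t\<in>{0..1}. p t = x} \<union> ?F" .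
    show "finite ?F" using fib_arc_finite assms(1) arc_reversepath by blast
    show "{t\<in>{0..1}. p t = x} \<prec> K" using A x by blast
    show "infinite K" by fact
  qed
  then show ?thesis using path e AI by (auto simp: alpha_I_loops_def alpha_I_path_def)
qed


lemma pc_eq: "homotopic_paths X p q \<Longrightarrow> path_class X p = path_class X q"
proof -
  assume h: "homotopic_paths X p q"
  show ?thesis unfolding path_class_def
    using homotopic_paths_trans[OF homotopic_paths_sym[OF h]] homotopic_paths_trans[OF h] by blast
qed

lemma pc_self: "path p \<Longrightarrow> path_image p \<subseteq> X \<Longrightarrow> p \<in> path_class X p"
  unfolding path_class_def by simp

lemma loopsD: "p \<in> loops X a \<Longrightarrow> path p \<and> path_image p \<subseteq> X \<and> pathstart p = a \<and> pathfinish p = a"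
  by (simp add: loops_def)

lemma join_loops: "p \<in> loops X a \<Longrightarrow> q \<in> loops X a \<Longrightarrow> p +++ q \<in> loops X a"
  by (auto simp: loops_def subset_path_image_join)

lemma fg_mult:
  assumes "p \<in> loops X a" "q \<in> loops X a"
  shows "mult (fundamental_group X a) (path_class X p) (path_class X q) = path_class X (p +++ q)"
proof -
  have P: "path p" "path_image p \<subseteq> X" "pathstart p = a" "pathfinish p = a"
    and Q: "path q" "path_image q \<subseteq> X" "pathstart q = a" "pathfinish q = a"
    using assms by (auto simp: loops_def)
  have "{r. \<exists>p'\<in>path_class X p. \<exists>q'\<in>path_class X q. homotopic_paths X (p' +++ q') r} = path_class X (p +++ q)"
  proof (rule equalityI; rule subsetI)
    fix r assume "r \<in> {r. \<exists>p'\<in>path_class X p. \<exists>q'\<in>path_class X q. homotopic_paths X (p' +++ q') r}"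
    then obtain p' q' where "homotopic_paths X p p'" "homotopic_paths X q q'" "homotopic_paths X (p' +++ q') r"
      by (auto simp: path_class_def)
    then have "homotopic_paths X (p +++ q) (p' +++ q')"
      using P Q by (intro homotopic_paths_join) auto
    then have "homotopic_paths X (p +++ q) r"
      using \<open>homotopic_paths X (p' +++ q') r\<close> by (rule homotopic_paths_trans)
    then show "r \<in> path_class X (p +++ q)" by (simp add: path_class_def)
  next
    fix r assume "r \<in> path_class X (p +++ q)"
    then have "homotopic_paths X (p +++ q) r" by (simp add: path_class_def)
    moreover have "p \<in> path_class X p" "q \<in> path_class X q" using P Q pc_self by auto
    ultimately show "r \<in> {r. \<exists>p'\<in>path_class X p. \<exists>q'\<in>path_class X q. homotopic_paths X (p' +++ q') r}"
      by blast
  qed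
  then show ?thesis by (simp add: fundamental_group_def)
qed

lemma const_loop: "a \<in> X \<Longrightarrow> (\<lambda>t. a) \<in> loops X a"
  by (auto simp: loops_def path_image_def pathstart_def pathfinish_def path_def)

lemma fg_group:
  assumes "a \<in> X" shows "group (fundamental_group X a)"
proof (rule groupI)
  let ?G = "fundamental_group X a"
  have car: "carrier ?G = path_class X ` loops X a" by (simp add: fundamental_group_def)
  show "x \<otimes>\<^bsub>?G\<^esub> y \<in> carrier ?G" if "x \<in> carrier ?G" "y \<in> carrier ?G" for x y
    using that by (auto simp: car fg_mult join_loops)
  show "\<one>\<^bsub>?G\<^esub> \<in> carrier ?G" using const_loop[OF assms] by (auto simp: fundamental_group_def)
  show "x \<otimes>\<^bsub>?G\<^esub> y \<otimes>\<^bsub>?G\<^esub> z = x \<otimes>\<^bsub>?G\<^esub> (y \<otimes>\<^bsub>?G\<^esub> z)"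
    if "x \<in> carrier ?G" "y \<in> carrier ?G" "z \<in> carrier ?G" for x y z
  proof -
    from that(1) obtain p where p: "p \<in> loops X a" "x = path_class X p" unfolding car by blast
    from that(2) obtain q where q: "q \<in> loops X a" "y = path_class X q" unfolding car by blast
    from that(3) obtain r where r: "r \<in> loops X a" "z = path_class X r" unfolding car by blast
    note pqr = p(1) q(1) r(1) p(2) q(2) r(2)
    have "homotopic_paths X (p +++ (q +++ r)) ((p +++ q) +++ r)"
      using pqr(1-3) by (intro homotopic_paths_assoc) (auto simp: loops_def)
    then have "path_class X (p +++ (q +++ r)) = path_class X ((p +++ q) +++ r)" by (rule pc_eq)
    then show ?thesis using pqr by (simp add: fg_mult join_loops)
  qed
  show "\<one>\<^bsub>?G\<^esub> \<otimes>\<^bsub>?G\<^esub> x = x" if "x \<in> carrier ?G" for x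
  proof -
    from that obtain p where p: "p \<in> loops X a" "x = path_class X p" unfolding car by blast
    have "homotopic_paths X ((\<lambda>t. a) +++ p) p" using p by (intro hp_lid) (auto simp: loops_def)
    then have "path_class X ((\<lambda>t. a) +++ p) = path_class X p" by (rule pc_eq)
    moreover have "\<one>\<^bsub>?G\<^esub> = path_class X (\<lambda>t. a)" by (simp add: fundamental_group_def)
    ultimately show ?thesis using p const_loop[OF assms] by (simp add: fg_mult)
  qed
  show "\<exists>y\<in>carrier ?G. y \<otimes>\<^bsub>?G\<^esub> x = \<one>\<^bsub>?G\<^esub>" if "x \<in> carrier ?G" for x
  proof -
    from that obtain p where p: "p \<in> loops X a" "x = path_class X p" unfolding car by blast
    have rp: "reversepath p \<in> loops X a" using p by (auto simp: loops_def)
    have "homotopic_paths X (reversepath p +++ reversepath (reversepath p)) (\<lambda>t. pathstart (reversepath p))"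
      using rp by (intro hp_rinv) (auto simp: loops_def)
    then have "homotopic_paths X (reversepath p +++ p) (\<lambda>t. a)" using p by (simp add: loops_def)
    then have "path_class X (reversepath p +++ p) = path_class X (\<lambda>t. a)" by (rule pc_eq)
    moreover have "\<one>\<^bsub>?G\<^esub> = path_class X (\<lambda>t. a)" by (simp add: fundamental_group_def)
    ultimately have "path_class X (reversepath p) \<otimes>\<^bsub>?G\<^esub> x = \<one>\<^bsub>?G\<^esub>"
      using p rp by (simp add: fg_mult)
    then show ?thesis using rp by (auto simp: car)
  qed
qed

definition Phi :: "'a::topological_space set \<Rightarrow> (real \<Rightarrow> 'a) \<Rightarrow> (real \<Rightarrow> 'a) set \<Rightarrow> (real \<Rightarrow> 'a) set" where
  "Phi X g C = {r. \<exists>p\<in>C. homotopic_paths X (cjp g p) r}"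

lemma conj_loops:
  assumes "path g" "path_image g \<subseteq> X" "pathstart g = a" "pathfinish g = b" "p \<in> loops X a"
  shows "cjp g p \<in> loops X b"
  using assms by (auto simp: loops_def cjp_def subset_path_image_join)

lemma Phi_class:
  assumes "path g" "path_image g \<subseteq> X" "pathstart g = a" "p \<in> loops X a"
  shows "Phi X g (path_class X p) = path_class X (cjp g p)"
proof -
  have P: "path p" "path_image p \<subseteq> X" "pathstart p = a" "pathfinish p = a"
    using assms by (auto simp: loops_def)
  show ?thesis
  proof (rule equalityI; rule subsetI)
    fix r assume "r \<in> Phi X g (path_class X p)"
    then obtain p' where "homotopic_paths X p p'" "homotopic_paths X (cjp g p') r"
      by (auto simp: Phi_def path_class_def)
    then show "r \<in> path_class X (cjp g p)"
      using P assms(1-3) conj_resp[of X p p' g] by (auto simp: path_class_def intro: homotopic_paths_trans)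
  next
    fix r assume "r \<in> path_class X (cjp g p)"
    then have "homotopic_paths X (cjp g p) r" by (simp add: path_class_def)
    moreover have "p \<in> path_class X p" using P pc_self by auto
    ultimately show "r \<in> Phi X g (path_class X p)" unfolding Phi_def by blast
  qed
qed

lemma alpha_loops_sub: "alpha_I_loops K I X a \<subseteq> loops X a"
  by (auto simp: alpha_I_loops_def alpha_I_path_def loops_def pathstart_def pathfinish_def)

lemma conj_class_cancel:
  assumes "path g" "path_image g \<subseteq> X" "pathstart g = a" "pathfinish g = b" "p \<in> loops X a"
  shows "Phi X (reversepath g) (Phi X g (path_class X p)) = path_class X p"
proof -
  have cl: "cjp g p \<in> loops X b" using assms conj_loops by blast
  have "Phi X (reversepath g) (Phi X g (path_class X p)) = path_class X (cjp (reversepath g) (cjp g p))"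
    using assms cl by (simp add: Phi_class)
  also have "\<dots> = path_class X p"
    using assms by (intro pc_eq conj_cancel[of g X a]) (auto simp: loops_def)
  finally show ?thesis .
qed

theorem theorem3p5:
  fixes X :: "'a::t2_space set" and I :: "'a set set" and K :: "'b set" and a b :: 'a
  assumes "locally_compact_space (top_of_set X)"
    and "arc_connected_set X"
    and "\<exists>p\<in>X. \<exists>q\<in>X. p \<noteq> q"
    and "is_ideal_on X I"
    and "infinite K"
    and "a \<in> X" and "b \<in> X"
  shows "P_group K I X a \<cong> P_group K I X b"
proof (cases "a = b")
  case True
  then show ?thesis using iso_set_refl is_isoI by blast
next
  case False
  then obtain g where g: "arc g" "path_image g \<subseteq> X" "pathstart g = a" "pathfinish g = b"
    using assms(2,6,7) unfolding arc_connected_set_def by blast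
  have pg: "path g" using g(1) arc_imp_path by blast
  have rg: "arc (reversepath g)" "path (reversepath g)" "path_image (reversepath g) \<subseteq> X"
    "pathstart (reversepath g) = b" "pathfinish (reversepath g) = a"
    using g pg arc_reversepath by auto
  define G where "G = fundamental_group X a"
  define H where "H = fundamental_group X b"
  define Sa where "Sa = path_class X ` alpha_I_loops K I X a"
  define Sb where "Sb = path_class X ` alpha_I_loops K I X b"
  define \<phi> where "\<phi> = Phi X g"
  have grG: "group G" unfolding G_def using assms(6) by (rule fg_group)
  have grH: "group H" unfolding H_def using assms(7) by (rule fg_group)
  have carG: "carrier G = path_class X ` loops X a" by (simp add: G_def fundamental_group_def)
  have carH: "carrier H = path_class X ` loops X b" by (simp add: H_def fundamental_group_def)
  have \<phi>c: "\<phi> (path_class X p) = path_class X (cjp g p)" if "p \<in> loops X a" for p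
    unfolding \<phi>_def using pg g that by (intro Phi_class) auto
  have hom: "\<phi> \<in> hom G H"
  proof (rule homI)
    fix x assume "x \<in> carrier G"
    then obtain p where p: "p \<in> loops X a" "x = path_class X p" unfolding carG by blast
    then show "\<phi> x \<in> carrier H" unfolding carH using \<phi>c conj_loops[OF pg g(2-4)] by auto
  next
    fix x y assume "x \<in> carrier G" "y \<in> carrier G"
    then obtain p q where p: "p \<in> loops X a" "x = path_class X p" and q: "q \<in> loops X a" "y = path_class X q"
      unfolding carG by blast
    have cp: "cjp g p \<in> loops X b" and cq: "cjp g q \<in> loops X b"
      using conj_loops[OF pg g(2-4)] p q by auto
    have "\<phi> (x \<otimes>\<^bsub>G\<^esub> y) = path_class X (cjp g (p +++ q))"
      using p q by (simp add: G_def fg_mult join_loops \<phi>c)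
    also have "\<dots> = path_class X (cjp g p +++ cjp g q)"
      using p q pg g by (intro pc_eq conj_mult[of g X a]) (auto simp: loops_def)
    also have "\<dots> = \<phi> x \<otimes>\<^bsub>H\<^esub> \<phi> y"
      using p q cp cq by (simp add: H_def fg_mult \<phi>c)
    finally show "\<phi> (x \<otimes>\<^bsub>G\<^esub> y) = \<phi> x \<otimes>\<^bsub>H\<^esub> \<phi> y" .
  qed
  have inj: "inj_on \<phi> (carrier G)"
  proof (rule inj_on_inverseI)
    fix x assume "x \<in> carrier G"
    then obtain p where p: "p \<in> loops X a" "x = path_class X p" unfolding carG by blast
    then show "Phi X (reversepath g) (\<phi> x) = x"
      unfolding \<phi>_def using conj_class_cancel[OF pg g(2-4)] by auto
  qed
  have SaG: "Sa \<subseteq> carrier G" unfolding Sa_def carG using alpha_loops_sub by blast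
  have gh: "group_hom G H \<phi>" using grG grH hom by (simp add: group_hom_def group_hom_axioms_def)
  have gen: "generate H (\<phi> ` Sa) = \<phi> ` generate G Sa"
    using group_hom.generate_img[OF gh SaG] .
  have img: "\<phi> ` Sa = Sb"
  proof (rule equalityI; rule subsetI)
    fix y assume "y \<in> \<phi> ` Sa"
    then obtain p where p: "p \<in> alpha_I_loops K I X a" "y = \<phi> (path_class X p)" unfolding Sa_def by blast
    then have "y = path_class X (cjp g p)" using \<phi>c alpha_loops_sub by blast
    moreover have "cjp g p \<in> alpha_I_loops K I X b" using conj_alpha[OF g assms(5) p(1)] .
    ultimately show "y \<in> Sb" unfolding Sb_def by blast
  next
    fix y assume "y \<in> Sb"
    then obtain q where q: "q \<in> alpha_I_loops K I X b" "y = path_class X q" unfolding Sb_def by blast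
    have c: "cjp (reversepath g) q \<in> alpha_I_loops K I X a" using conj_alpha[OF rg(1,3,4,5) assms(5) q(1)] .
    have qL: "q \<in> loops X b" using q(1) alpha_loops_sub by blast
    have e1: "Phi X (reversepath g) (path_class X q) = path_class X (cjp (reversepath g) q)"
      using Phi_class[OF rg(2,3,4) qL] .
    have "Phi X (reversepath (reversepath g)) (Phi X (reversepath g) (path_class X q)) = path_class X q"
      using conj_class_cancel[OF rg(2-5) qL] .
    then have "\<phi> (path_class X (cjp (reversepath g) q)) = y"
      using e1 q(2) by (simp add: \<phi>_def reversepath_reversepath)
    then show "y \<in> \<phi> ` Sa" using c unfolding Sa_def by blast
  qed
  have genG: "generate G Sa \<subseteq> carrier G" using group.generate_in_carrier[OF grG SaG] by blast
  have cPa: "carrier (P_group K I X a) = generate G Sa" by (simp add: P_group_def G_def Sa_def)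
  have cPb: "carrier (P_group K I X b) = generate H Sb" by (simp add: P_group_def H_def Sb_def)
  have mPa: "mult (P_group K I X a) = mult G" by (simp add: P_group_def G_def)
  have mPb: "mult (P_group K I X b) = mult H" by (simp add: P_group_def H_def)
  have "\<phi> \<in> iso (P_group K I X a) (P_group K I X b)"
    unfolding iso_def hom_def
  proof (intro CollectI conjI)
    show "\<phi> \<in> carrier (P_group K I X a) \<rightarrow> carrier (P_group K I X b)"
      unfolding cPa cPb using gen img by auto
    show "\<forall>x\<in>carrier (P_group K I X a). \<forall>y\<in>carrier (P_group K I X a).
        \<phi> (x \<otimes>\<^bsub>P_group K I X a\<^esub> y) = \<phi> x \<otimes>\<^bsub>P_group K I X b\<^esub> \<phi> y"
      unfolding cPa mPa mPb using hom genG unfolding hom_def by blast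
    show "bij_betw \<phi> (carrier (P_group K I X a)) (carrier (P_group K I X b))"
      unfolding cPa cPb bij_betw_def using inj_on_subset[OF inj genG] gen img by auto
  qed
  then show ?thesis by (rule is_isoI)
qed


end
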